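(* Let $\mathbb{R}^n$ be endowed with the Euclidean norm $\|\cdot\|_2$, let $A\in\mathbb{R}^{m\times n}$ have at least two different columns, and let $f:\mathbb{R}^m\to\mathbb{R}\cup\{\infty\}$ be a differentiable convex function with $\mathrm{conv}(A)\subseteq\mathrm{dom}(f)$ and $\frac{L_{f,A}}{\mu^\star_{f,A}}<\infty$. Let $x_0\in\Delta_{n-1}$ and for $k=0,1,\dots$ let \[ x_{k+1}=\operatorname*{argmin}_{x\in\Delta_{n-1}}\left\{f(Ax_k)+\langle\nabla f(Ax_k),A(x-x_k)\rangle+\frac{L_{f,A}}{2}\|x-x_k\|_2^2\right\}. \] Then for all $k\ge0$ \[ f(Ax_k)-f^\star\le\left(1-\min\left\{\frac{\mu^\star_{f,A}}{4L_{f,A}},\frac12\right\}\right)^k(f(Ax_0)-f^\star). \]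
   Context: $\Delta_{n-1}=\{x\in\mathbb{R}^n_+:\sum_ix_i=1\}$, $\mathrm{conv}(A)=\{Ax:x\in\Delta_{n-1}\}$. For $u\in\mathrm{conv}(A)$, $Z(u)=\{z\in\Delta_{n-1}:Az=u\}$, $\mathrm{dist}(x,Z(u))=\min_{z\in Z(u)}\|x-z\|_2$, and $L_{f,A}=\sup_{u\in\mathrm{conv}(A),\,x\in\Delta_{n-1}\setminus Z(u)}\frac{2(f(Ax)-f(u)-\langle\nabla f(u),Ax-u\rangle)}{\mathrm{dist}(x,Z(u))^2}$. $f^\star=\min_{x\in\Delta_{n-1}}f(Ax)$, $Z^\star=\{z\in\Delta_{n-1}:f(Az)=f^\star\}$, and $\mu^\star_{f,A}=\inf_{x\in\Delta_{n-1}\setminus Z^\star}\frac{2(f(Ax)-f^\star)}{\mathrm{dist}(x,Z^\star)^2}$ with $\mathrm{dist}(x,Z^\star)=\min_{z\in Z^\star}\|x-z\|_2$. *)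

theory Defs
  imports "HOL-Analysis.Analysis"
begin

definition unit_simplex :: "(real^'n) set" where
  "unit_simplex = {x. (\<forall>i. 0 \<le> x $ i) \<and> (\<Sum>i\<in>UNIV. x $ i) = 1}"

definition convA :: "real^'n^'m \<Rightarrow> (real^'m) set" where
  "convA A = (\<lambda>x. A *v x) ` unit_simplex"

definition Zset :: "real^'n^'m \<Rightarrow> real^'m \<Rightarrow> (real^'n) set" where
  "Zset A u = {z \<in> unit_simplex. A *v z = u}"

definition grad :: "(real^'m \<Rightarrow> real) \<Rightarrow> real^'m \<Rightarrow> real^'m" where
  "grad f u = (SOME g. (f has_derivative (\<lambda>h. g \<bullet> h)) (at u))"

definition LfA :: "(real^'m \<Rightarrow> real) \<Rightarrow> real^'n^'m \<Rightarrow> ereal" where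
  "LfA f A = (SUP p \<in> {(u, x). u \<in> convA A \<and> x \<in> unit_simplex - Zset A u}.
      ereal (2 * (f (A *v snd p) - f (fst p) - grad f (fst p) \<bullet> (A *v snd p - fst p))
             / (infdist (snd p) (Zset A (fst p)))\<^sup>2))"

definition fstar :: "(real^'m \<Rightarrow> real) \<Rightarrow> real^'n^'m \<Rightarrow> real" where
  "fstar f A = (INF x \<in> unit_simplex. f (A *v x))"

definition Zstar :: "(real^'m \<Rightarrow> real) \<Rightarrow> real^'n^'m \<Rightarrow> (real^'n) set" where
  "Zstar f A = {z \<in> unit_simplex. f (A *v z) = fstar f A}"

definition mustar :: "(real^'m \<Rightarrow> real) \<Rightarrow> real^'n^'m \<Rightarrow> ereal" where
  "mustar f A = (INF x \<in> unit_simplex - Zstar f A.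
      ereal (2 * (f (A *v x) - fstar f A) / (infdist x (Zstar f A))\<^sup>2))"

end

theory Submission
  imports Defs
begin

lemma tangent:
  fixes f :: "real^'m \<Rightarrow> real"
  assumes cv: "convex_on D f" and uv: "u \<in> D" "v \<in> D"
    and d: "(f has_derivative (\<lambda>h. g \<bullet> h)) (at u)"
  shows "g \<bullet> (v - u) \<le> f v - f u"
proof -
  define \<phi> where "\<phi> t = f (u + t *\<^sub>R (v - u))" for t
  have "((\<lambda>t. u + t *\<^sub>R (v - u)) has_derivative (\<lambda>t. t *\<^sub>R (v - u))) (at 0)"
    by (auto intro!: derivative_eq_intros)
  moreover have "(f has_derivative (\<lambda>h. g \<bullet> h)) (at ((\<lambda>t. u + t *\<^sub>R (v - u)) 0))"
    using d by simp
  ultimately have "((f \<circ> (\<lambda>t. u + t *\<^sub>R (v - u))) has_derivative ((\<lambda>h. g \<bullet> h) \<circ> (\<lambda>t. t *\<^sub>R (v - u)))) (at 0)"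
    by (rule diff_chain_at)
  hence "(\<phi> has_derivative (\<lambda>t. g \<bullet> (t *\<^sub>R (v - u)))) (at 0)"
    unfolding \<phi>_def by (simp add: o_def)
  hence "(\<phi> has_field_derivative (g \<bullet> (v - u))) (at 0)"
    unfolding has_field_derivative_def by (simp add: mult.commute[of _ "g \<bullet> (v - u)"])
  hence lim: "((\<lambda>t. (\<phi> t - \<phi> 0) / (t - 0)) \<longlongrightarrow> g \<bullet> (v - u)) (at_right 0)"
    unfolding has_field_derivative_iff by (rule tendsto_mono[rotated]) (simp add: at_le)
  have ev: "eventually (\<lambda>t. (\<phi> t - \<phi> 0) / (t - 0) \<le> f v - f u) (at_right (0::real))"
    unfolding eventually_at_right_field
  proof (intro exI[of _ 1] conjI allI impI)
    fix t :: real assume t0: "0 < t" and t1: "t < 1"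
    note t = t0 t1
    have "\<phi> t = f ((1 - t) *\<^sub>R u + t *\<^sub>R v)" unfolding \<phi>_def
      by (simp add: algebra_simps)
    also have "\<dots> \<le> (1 - t) * f u + t * f v" using convex_onD[OF cv, of t u v] t uv by simp
    finally have "\<phi> t - \<phi> 0 \<le> t * (f v - f u)" by (simp add: \<phi>_def algebra_simps)
    thus "(\<phi> t - \<phi> 0) / (t - 0) \<le> f v - f u" using t by (simp add: divide_le_eq mult.commute)
  qed simp
  show ?thesis by (rule tendsto_upperbound[OF lim ev]) simp
qed

lemma lin_inner:
  fixes f' :: "'a::euclidean_space \<Rightarrow> real"
  assumes "linear f'"
  shows "f' = (\<lambda>h. (\<Sum>b\<in>Basis. f' b *\<^sub>R b) \<bullet> h)"
proof
  fix h
  have "f' h = f' (\<Sum>b\<in>Basis. (h \<bullet> b) *\<^sub>R b)" by (simp add: euclidean_representation)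
  also have "\<dots> = (\<Sum>b\<in>Basis. (h \<bullet> b) * f' b)"
    using assms by (simp add: linear_sum linear_scale)
  also have "\<dots> = (\<Sum>b\<in>Basis. f' b *\<^sub>R b) \<bullet> h"
    by (simp add: inner_sum_right inner_commute mult.commute)
  finally show "f' h = (\<Sum>b\<in>Basis. f' b *\<^sub>R b) \<bullet> h" .
qed

lemma grad_deriv:
  fixes f :: "real^'m \<Rightarrow> real"
  assumes "f differentiable (at u)"
  shows "(f has_derivative (\<lambda>h. grad f u \<bullet> h)) (at u)"
proof -
  obtain f' where d: "(f has_derivative f') (at u)" using assms differentiable_def by blast
  hence "linear f'" using has_derivative_linear by blast
  hence "f' = (\<lambda>h. (\<Sum>b\<in>Basis. f' b *\<^sub>R b) \<bullet> h)" by (rule lin_inner)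
  with d have "\<exists>g. (f has_derivative (\<lambda>h. g \<bullet> h)) (at u)" by metis
  thus ?thesis unfolding grad_def by (rule someI_ex)
qed

lemma simplex_comb:
  assumes "x \<in> unit_simplex" "z \<in> unit_simplex" "0 \<le> t" "t \<le> 1"
  shows "x + t *\<^sub>R (z - x) \<in> unit_simplex"
proof -
  have "(\<Sum>i\<in>UNIV. (x + t *\<^sub>R (z - x)) $ i) = (\<Sum>i\<in>UNIV. x $ i) + t * ((\<Sum>i\<in>UNIV. z $ i) - (\<Sum>i\<in>UNIV. x $ i))"
    by (simp add: sum.distrib sum_subtractf sum_distrib_left algebra_simps)
  moreover have "0 \<le> (x + t *\<^sub>R (z - x)) $ i" for i
  proof -
    have "0 \<le> x $ i" "0 \<le> z $ i" using assms(1,2) unfolding unit_simplex_def by auto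
    hence "0 \<le> (1 - t) * x $ i + t * z $ i" using assms(3,4) by simp
    thus ?thesis by (simp add: algebra_simps)
  qed
  ultimately show ?thesis using assms(1,2) unfolding unit_simplex_def by auto
qed

lemma simplex_compact: "compact (unit_simplex :: (real^'n) set)"
proof -
  have "unit_simplex = (\<Inter>i. {x::real^'n. 0 \<le> x $ i}) \<inter> {x. (\<Sum>i\<in>UNIV. x $ i) = 1}"
    unfolding unit_simplex_def by auto
  moreover have "closed \<dots>"
    by (intro closed_Int closed_INT ballI closed_Collect_le closed_Collect_eq continuous_intros)
  ultimately have cl: "closed (unit_simplex :: (real^'n) set)" by simp
  have "bounded (unit_simplex :: (real^'n) set)"
    unfolding bounded_iff
  proof (intro exI[of _ 1] ballI)
    fix x :: "real^'n" assume x: "x \<in> unit_simplex"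
    have "norm x \<le> (\<Sum>i\<in>UNIV. \<bar>x $ i\<bar>)" by (rule norm_le_l1_cart)
    also have "\<dots> = 1" using x unfolding unit_simplex_def by simp
    finally show "norm x \<le> 1" .
  qed
  with cl show ?thesis by (simp add: compact_eq_bounded_closed)
qed

lemma step_rate:
  fixes e e' \<mu> L :: real
  assumes "0 \<le> e" "0 < \<mu>" "0 \<le> L"
    and H: "\<And>t. 0 \<le> t \<Longrightarrow> t \<le> 1 \<Longrightarrow> e' \<le> (1 - t) * e + L * t\<^sup>2 * e / \<mu>"
  shows "e' \<le> (if L = 0 then 1/2 else 1 - min (\<mu> / (4 * L)) (1/2)) * e"
proof (cases "L = 0")
  case True
  thus ?thesis using H[of 1] assms by simp
next
  case False
  hence L: "L > 0" using assms by simp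
  show ?thesis
  proof (cases "\<mu> / (4 * L) \<le> 1/2")
    case True
    define t where "t = \<mu> / (2 * L)"
    have t: "0 \<le> t" "t \<le> 1" using True L assms unfolding t_def by (auto simp: field_simps)
    have "(1 - t) * e + L * t\<^sup>2 * e / \<mu> = (1 - \<mu> / (4 * L)) * e"
      unfolding t_def using L assms by (simp add: field_simps power2_eq_square)
    thus ?thesis using H[OF t] True False by simp
  next
    case c: False
    have "L * e / \<mu> \<le> e / 2"
    proof -
      have "L / \<mu> \<le> 1/2" using c L assms by (auto simp: field_simps)
      hence "L / \<mu> * e \<le> 1/2 * e" using assms by (intro mult_right_mono) auto
      thus ?thesis by simp
    qed
    moreover have "e' \<le> L * e / \<mu>" using H[of 1] by simp
    ultimately have "e' \<le> 1/2 * e" by linarith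
    moreover have "min (\<mu> / (4 * L)) (1/2) = 1/2" using c by simp
    ultimately show ?thesis using False by simp
  qed
qed

theorem proposition4:
  fixes A :: "real^'n^'m" and f :: "real^'m \<Rightarrow> real" and D :: "(real^'m) set"
    and x :: "nat \<Rightarrow> real^'n"
  assumes two_cols: "\<exists>i j. column i A \<noteq> column j A"
    and domD: "open D" "convex D"
    and cvx: "convex_on D f"
    and diff: "\<forall>u\<in>D. f differentiable (at u)"
    and dom: "convA A \<subseteq> D"
    and L_fin: "LfA f A < \<infinity>"
    and mu_pos: "mustar f A > 0"
    and x0: "x 0 \<in> unit_simplex"
    and step: "\<forall>k. x (Suc k) \<in> unit_simplex \<and>
       (\<forall>y\<in>unit_simplex.
          f (A *v x k) + grad f (A *v x k) \<bullet> (A *v (x (Suc k) - x k))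
            + real_of_ereal (LfA f A) / 2 * (norm (x (Suc k) - x k))\<^sup>2
          \<le> f (A *v x k) + grad f (A *v x k) \<bullet> (A *v (y - x k))
            + real_of_ereal (LfA f A) / 2 * (norm (y - x k))\<^sup>2)"
  shows "\<forall>k. ereal (f (A *v x k) - fstar f A)
           \<le> (1 - min (mustar f A / (4 * LfA f A)) (1/2)) ^ k * ereal (f (A *v x 0) - fstar f A)"
proof -
  define Lr where "Lr = real_of_ereal (LfA f A)"
  define fs where "fs = fstar f A"
  define e where "e k = f (A *v x k) - fs" for k
  have xS: "x k \<in> unit_simplex" for k using x0 step by (cases k) auto
  have AconvA: "A *v y \<in> convA A" if "y \<in> unit_simplex" for y
    using that unfolding convA_def by auto
  have AD: "A *v y \<in> D" if "y \<in> unit_simplex" for y using AconvA[OF that] dom by auto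
  have gd: "(f has_derivative (\<lambda>h. grad f u \<bullet> h)) (at u)" if "u \<in> D" for u
    using grad_deriv diff that by blast
  have tang: "grad f u \<bullet> (v - u) \<le> f v - f u" if "u \<in> D" "v \<in> D" for u v
    using tangent[OF cvx that gd[OF that(1)]] .
  obtain i j where ij: "column i A \<noteq> column j A" using two_cols by blast
  have ax: "axis l 1 \<in> unit_simplex" for l :: 'n
    unfolding unit_simplex_def axis_def by auto
  define P where "P = {(u, x). u \<in> convA A \<and> x \<in> unit_simplex - Zset A u}"
  have LfA_P: "LfA f A = (SUP p \<in> P. ereal (2 * (f (A *v snd p) - f (fst p) - grad f (fst p) \<bullet> (A *v snd p - fst p))
             / (infdist (snd p) (Zset A (fst p)))\<^sup>2))" unfolding LfA_def P_def ..
  have pP: "(A *v axis i 1, axis j 1) \<in> P"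
    using ij ax AconvA[OF ax[of i]] unfolding P_def Zset_def by (auto simp: matrix_vector_mult_basis)
  have "ereal (2 * (f (A *v axis j 1) - f (A *v axis i 1) - grad f (A *v axis i 1) \<bullet> (A *v axis j 1 - A *v axis i 1))
             / (infdist (axis j 1) (Zset A (A *v axis i 1)))\<^sup>2) \<le> LfA f A"
    unfolding LfA_P using pP by (rule SUP_upper2) simp
  moreover have "0 \<le> 2 * (f (A *v axis j 1) - f (A *v axis i 1) - grad f (A *v axis i 1) \<bullet> (A *v axis j 1 - A *v axis i 1))
             / (infdist (axis j 1) (Zset A (A *v axis i 1)))\<^sup>2"
    using tang[OF AD[OF ax[of i]] AD[OF ax[of j]]] by (intro divide_nonneg_nonneg) auto
  ultimately have L0: "0 \<le> LfA f A" by (meson ereal_less_eq(5) order_trans zero_ereal_def)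
  have Leq: "LfA f A = ereal Lr" using L0 L_fin unfolding Lr_def by (cases "LfA f A") auto
  have Lr0: "0 \<le> Lr" using L0 Leq by simp
  have model: "f (A *v y) \<le> f (A *v x k) + grad f (A *v x k) \<bullet> (A *v (y - x k)) + Lr / 2 * (norm (y - x k))\<^sup>2"
    if y: "y \<in> unit_simplex" for y k
  proof (cases "A *v y = A *v x k")
    case True
    thus ?thesis using Lr0 by (simp add: matrix_vector_mult_diff_distrib)
  next
    case False
    define u where "u = A *v x k"
    define d where "d = infdist y (Zset A u)"
    have xkZ: "x k \<in> Zset A u" using xS unfolding Zset_def u_def by auto
    have "(u, y) \<in> P" using False y AconvA[OF xS[of k]] unfolding P_def Zset_def u_def by auto
    hence "ereal (2 * (f (A *v y) - f u - grad f u \<bullet> (A *v y - u)) / d\<^sup>2) \<le> LfA f A"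
      unfolding LfA_P d_def by (rule SUP_upper2) simp
    hence r: "2 * (f (A *v y) - f u - grad f u \<bullet> (A *v y - u)) / d\<^sup>2 \<le> Lr" using Leq by simp
    have cl: "closed (Zset A u)"
    proof -
      have "Zset A u = {z \<in> unit_simplex. A *v z = u}" unfolding Zset_def ..
      moreover have "closed \<dots>"
        by (rule continuous_closed_preimage_constant)
           (auto intro!: linear_continuous_on compact_imp_closed simplex_compact)
      ultimately show ?thesis by simp
    qed
    have "y \<notin> Zset A u" using False unfolding Zset_def u_def by auto
    hence dpos: "d > 0" unfolding d_def using infdist_pos_not_in_closed[OF cl _] xkZ by blast
    have dle: "d \<le> norm (y - x k)" unfolding d_def using infdist_le[OF xkZ, of y] by (simp add: dist_norm)
    have "f (A *v y) - f u - grad f u \<bullet> (A *v y - u) \<le> Lr / 2 * d\<^sup>2"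
      using r dpos by (simp add: divide_le_eq field_simps)
    also have "\<dots> \<le> Lr / 2 * (norm (y - x k))\<^sup>2"
      using Lr0 dle dpos by (intro mult_left_mono power_mono) auto
    finally show ?thesis unfolding u_def by (simp add: matrix_vector_mult_diff_distrib)
  qed
  have desc: "f (A *v x (Suc k)) \<le> f (A *v x k) + grad f (A *v x k) \<bullet> (A *v (y - x k)) + Lr / 2 * (norm (y - x k))\<^sup>2"
    if y: "y \<in> unit_simplex" for y k
  proof -
    have "f (A *v x k) + grad f (A *v x k) \<bullet> (A *v (x (Suc k) - x k))
            + real_of_ereal (LfA f A) / 2 * (norm (x (Suc k) - x k))\<^sup>2
          \<le> f (A *v x k) + grad f (A *v x k) \<bullet> (A *v (y - x k))
            + real_of_ereal (LfA f A) / 2 * (norm (y - x k))\<^sup>2" using step y by blast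
    thus ?thesis using model[OF xS[of "Suc k"], of k] unfolding Lr_def by linarith
  qed
  have contf: "continuous_on D f"
    using diff by (meson continuous_at_imp_continuous_on differentiable_imp_continuous_within)
  have contg: "continuous_on unit_simplex (\<lambda>y. f (A *v y))"
    by (rule continuous_on_compose2[OF contf]) (auto intro: linear_continuous_on AD)
  obtain z0 where z0: "z0 \<in> unit_simplex" "\<And>y. y \<in> unit_simplex \<Longrightarrow> f (A *v z0) \<le> f (A *v y)"
    using continuous_attains_inf[OF simplex_compact _ contg] xS[of 0] by blast
  have fs_eq: "fs = f (A *v z0)" unfolding fs_def fstar_def
    by (rule antisym, rule cINF_lower, auto intro!: cINF_greatest z0 simp: bdd_below_def)
  have fs_le: "fs \<le> f (A *v y)" if "y \<in> unit_simplex" for y using z0 that fs_eq by simp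
  have e0: "0 \<le> e k" for k using fs_le[OF xS[of k]] unfolding e_def by simp
  have Zs: "Zstar f A = {z \<in> unit_simplex. f (A *v z) = fs}" unfolding Zstar_def fs_def ..
  have clZ: "closed (Zstar f A)" unfolding Zs
    by (rule continuous_closed_preimage_constant[OF contg compact_imp_closed[OF simplex_compact]])
  have z0Z: "z0 \<in> Zstar f A" unfolding Zs using z0 fs_eq by simp
  show ?thesis
  proof (cases "mustar f A")
    case PInf
    have "x k \<in> Zstar f A" for k
    proof (rule ccontr)
      assume "x k \<notin> Zstar f A"
      hence "mustar f A \<le> ereal (2 * (f (A *v x k) - fstar f A) / (infdist (x k) (Zstar f A))\<^sup>2)"
        unfolding mustar_def using xS by (intro INF_lower) auto
      thus False using PInf by simp
    qed
    hence "e k = 0" for k unfolding e_def using Zs by auto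
    thus ?thesis unfolding e_def fs_def by (simp add: zero_ereal_def[symmetric])
  next
    case MInf
    thus ?thesis using mu_pos by simp
  next
    case (real \<mu>)
    have \<mu>0: "\<mu> > 0" using mu_pos real by simp
    define r where "r = (if Lr = 0 then 1/2 else 1 - min (\<mu> / (4 * Lr)) (1/2))"
    have r0: "0 \<le> r" unfolding r_def by auto
    have ceq: "1 - min (mustar f A / (4 * LfA f A)) (1/2) = ereal r"
    proof (cases "Lr = 0")
      have h2: "1 - 1 / ereal 2 = ereal (1/2)" "(1::ereal) / ereal 2 = ereal (1/2)"
        by (simp_all add: one_ereal_def)
      have h3: "(1::ereal) - ereal (1/2) = ereal (1/2)" unfolding one_ereal_def by simp
      case True
      have "ereal \<mu> / 0 = \<infinity>" using \<mu>0 by (simp add: divide_ereal_def)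
      thus ?thesis using True unfolding real Leq r_def by (simp add: zero_ereal_def[symmetric] min_def h2 h3)
    next
      case False
      hence "ereal \<mu> / (4 * ereal Lr) = ereal (\<mu> / (4 * Lr))" by simp
      moreover have "(1/2::ereal) = ereal (1/2)" by (simp add: one_ereal_def)
      moreover have "min (ereal (\<mu> / (4 * Lr))) (ereal (1/2)) = ereal (min (\<mu> / (4 * Lr)) (1/2))"
        by (simp add: min_def)
      moreover have "(1::ereal) - ereal m = ereal (1 - m)" for m unfolding one_ereal_def by simp
      ultimately have "1 - min (ereal \<mu> / (4 * ereal Lr)) (1/2) = ereal (1 - min (\<mu> / (4 * Lr)) (1/2))"
        by (simp only:)
      thus ?thesis using False unfolding real Leq r_def by simp
    qed
    have stp: "e (Suc k) \<le> r * e k" for k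
    proof (cases "x k \<in> Zstar f A")
      case True
      hence ek: "e k = 0" unfolding e_def using Zs by auto
      have "f (A *v x (Suc k)) \<le> f (A *v x k)" using desc[OF xS[of k], of k] by simp
      hence "e (Suc k) \<le> 0" using ek unfolding e_def by simp
      thus ?thesis using ek by simp
    next
      case False
      define d where "d = infdist (x k) (Zstar f A)"
      have dpos: "d > 0" unfolding d_def using infdist_pos_not_in_closed[OF clZ _ False] z0Z by blast
      have "mustar f A \<le> ereal (2 * (f (A *v x k) - fstar f A) / (infdist (x k) (Zstar f A))\<^sup>2)"
        unfolding mustar_def using xS False by (intro INF_lower) auto
      hence "\<mu> \<le> 2 * e k / d\<^sup>2" unfolding real e_def d_def fs_def by simp
      hence dmu: "d\<^sup>2 \<le> 2 * e k / \<mu>" using dpos \<mu>0 by (simp add: field_simps)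
      obtain z where zZ: "z \<in> Zstar f A" and dz: "infdist (x k) (Zstar f A) = dist (x k) z"
        using infdist_attains_inf[OF clZ] z0Z by blast
      have zS: "z \<in> unit_simplex" and fz: "f (A *v z) = fs" using zZ unfolding Zs by auto
      have gz: "grad f (A *v x k) \<bullet> (A *v (z - x k)) \<le> - e k"
        using tang[OF AD[OF xS[of k]] AD[OF zS]] fz unfolding e_def
        by (simp add: matrix_vector_mult_diff_distrib)
      have H: "e (Suc k) \<le> (1 - t) * e k + Lr * t\<^sup>2 * e k / \<mu>" if t: "0 \<le> t" "t \<le> 1" for t
      proof -
        define y where "y = x k + t *\<^sub>R (z - x k)"
        have yS: "y \<in> unit_simplex" unfolding y_def using simplex_comb[OF xS[of k] zS t] .
        have ny: "(norm (y - x k))\<^sup>2 = t\<^sup>2 * d\<^sup>2"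
          unfolding y_def d_def dz using t by (simp add: dist_norm norm_minus_commute power_mult_distrib)
        have gy: "grad f (A *v x k) \<bullet> (A *v (y - x k)) = t * (grad f (A *v x k) \<bullet> (A *v (z - x k)))"
          unfolding y_def by (simp add: linear_scale)
        have "e (Suc k) \<le> e k + t * (grad f (A *v x k) \<bullet> (A *v (z - x k))) + Lr / 2 * (t\<^sup>2 * d\<^sup>2)"
          using desc[OF yS, of k] ny gy unfolding e_def by simp
        also have "\<dots> \<le> e k + t * (- e k) + Lr / 2 * (t\<^sup>2 * (2 * e k / \<mu>))"
          using t gz dmu Lr0 by (intro add_mono mult_left_mono) auto
        also have "\<dots> = (1 - t) * e k + Lr * t\<^sup>2 * e k / \<mu>" by (simp add: field_simps)
        finally show ?thesis .
      qed
      show ?thesis unfolding r_def by (rule step_rate[OF e0 \<mu>0 Lr0 H])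
    qed
    have rk: "e k \<le> r ^ k * e 0" for k
    proof (induction k)
      case 0 thus ?case by simp
    next
      case (Suc k)
      have "e (Suc k) \<le> r * e k" by (rule stp)
      also have "\<dots> \<le> r * (r ^ k * e 0)" using Suc r0 by (intro mult_left_mono) auto
      finally show ?case by simp
    qed
    show ?thesis
    proof
      fix k
      have "ereal (e k) \<le> ereal (r ^ k * e 0)" using rk by simp
      also have "\<dots> = (ereal r) ^ k * ereal (e 0)" by simp
      finally show "ereal (f (A *v x k) - fstar f A)
           \<le> (1 - min (mustar f A / (4 * LfA f A)) (1/2)) ^ k * ereal (f (A *v x 0) - fstar f A)"
        unfolding ceq e_def fs_def .
    qed
  qed
qed

end
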